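(* For each $i\in\{1,2,3\}$, $P_i'=2P_i''-M$, i.e. $P_i''$ is the midpoint of $MP_i'$. Hence $T'=P_1'P_2'P_3'$ is the image of $T''=P_1''P_2''P_3''$ under the homothety with center $M$ and ratio $2$, and the area of $T''$ equals $\frac{27\sqrt3}{64}\frac{c^4}{ab}$ (one quarter of the area of $T'$), independent of $u$.
   Context: Let $a>b>0$ and $c>0$ with $c^2=a^2-b^2$. Let $\mathcal{E}$ be the ellipse $x^2/a^2+y^2/b^2=1$, parametrized by $P(t)=(a\cos t,b\sin t)$. Fix $u\in\mathbb{R}$, let $M=(a\cos u,b\sin u)$ and $\Delta_u(t)=(x_u(t),y_u(t))$, where $x_u(t)=\frac1a\big(c^2(1+\cos(t+u))\cos t-a^2\cos u\big)$ and $y_u(t)=\frac1b\big(c^2\cos t\sin(t+u)-c^2\sin t-a^2\sin u\big)$ (the negative pedal curve of $\mathcal{E}$ with respect to $M$). For $i=1,2,3$ let $t_i=-u/3-2\pi(i-1)/3$, $P_i'=\Delta_u(t_i)$ (the cusps), and $P_i''=\left(\frac{c^2\cos^3 t_i}{a},-\frac{c^2\sin^3 t_i}{b}\right)$ (the center of curvature of $\mathcal{E}$ at $P(t_i)$). *)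

theory Defs
  imports "HOL-Analysis.Analysis"
begin

text \<open>Negative pedal curve Delta_u of the ellipse x^2/a^2+y^2/b^2=1 w.r.t. M = (a cos u, b sin u);
  here c2 stands for c^2 = a^2 - b^2.\<close>
definition neg_pedal :: "real \<Rightarrow> real \<Rightarrow> real \<Rightarrow> real \<Rightarrow> real \<Rightarrow> real \<times> real" where
  "neg_pedal a b c u t =
     ((c^2 * (1 + cos (t + u)) * cos t - a^2 * cos u) / a,
      (c^2 * cos t * sin (t + u) - c^2 * sin t - a^2 * sin u) / b)"

definition ell_point :: "real \<Rightarrow> real \<Rightarrow> real \<Rightarrow> real \<times> real" where
  "ell_point a b t = (a * cos t, b * sin t)"

definition cusp_param :: "real \<Rightarrow> nat \<Rightarrow> real" where
  "cusp_param u i = - u / 3 - 2 * pi * (real i - 1) / 3"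

definition curv_center :: "real \<Rightarrow> real \<Rightarrow> real \<Rightarrow> real \<Rightarrow> real \<times> real" where
  "curv_center a b c t = (c^2 * (cos t)^3 / a, - (c^2 * (sin t)^3 / b))"

definition tri_area :: "real \<times> real \<Rightarrow> real \<times> real \<Rightarrow> real \<times> real \<Rightarrow> real" where
  "tri_area p q r = \<bar>(fst q - fst p) * (snd r - snd p) - (fst r - fst p) * (snd q - snd p)\<bar> / 2"

end

theory Submission
  imports Defs
begin

lemma sin3: "sin (3*(t::real)) = 3 * sin t - 4 * sin t ^ 3"
proof -
  have "sin (3*t) = sin (2*t + t)" by simp
  also have "\<dots> = 3 * sin t - 4 * sin t ^ 3"
    unfolding sin_add sin_double cos_double
    using sin_cos_squared_add[of t] by algebra
  finally show ?thesis .
qed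

lemma key:
  assumes "a > 0" "b > 0" "c^2 = a^2 - b^2"
    and cu: "cos u = cos (3*t)" and su: "sin u = - sin (3*t)"
  shows "neg_pedal a b c u t = 2 *\<^sub>R curv_center a b c t - ell_point a b u"
proof -
  have cu': "cos u = 4 * cos t ^ 3 - 3 * cos t" using cu cos_treble_cos by simp
  have su': "sin u = 4 * sin t ^ 3 - 3 * sin t" using su sin3 by simp
  have sc: "sin t ^ 2 + cos t ^ 2 = 1" by simp
  have x: "c^2 * (1 + cos (t + u)) * cos t = 2 * c^2 * cos t ^ 3"
    unfolding cos_add cu' su' using sc by algebra
  have y: "c^2 * cos t * sin (t + u) - c^2 * sin t - a^2 * sin u = - 2 * c^2 * sin t ^ 3 - b^2 * sin u"
    unfolding sin_add cu' su' using sc assms(3) by algebra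
  show ?thesis using assms(1,2) unfolding neg_pedal_def curv_center_def ell_point_def
    apply (simp add: field_simps power2_eq_square)
    using x y by algebra
qed

lemma tri_scale: "tri_area (2 *\<^sub>R p - m) (2 *\<^sub>R q - m) (2 *\<^sub>R r - m) = 4 * tri_area p q r"
proof -
  obtain p1 p2 q1 q2 r1 r2 m1 m2 where "p = (p1,p2)" "q = (q1,q2)" "r = (r1,r2)" "m = (m1,m2)"
    by (cases p, cases q, cases r, cases m) auto
  moreover have "(2*q1 - m1 - (2*p1 - m1)) * (2*r2 - m2 - (2*p2 - m2)) - (2*r1 - m1 - (2*p1 - m1)) * (2*q2 - m2 - (2*p2 - m2))
     = 4 * ((q1 - p1) * (r2 - p2) - (r1 - p1) * (q2 - p2))" by algebra
  moreover have "\<And>x y::real. \<bar>4*x - 4*y\<bar> = 4 * \<bar>x - y\<bar>"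
  proof -
    fix x y :: real
    have "4*x - 4*y = 4*(x-y)" by simp
    then show "\<bar>4*x - 4*y\<bar> = 4 * \<bar>x - y\<bar>" by (simp only: abs_mult)
  qed
  ultimately show ?thesis unfolding tri_area_def by (simp add: abs_mult)
qed

lemma cos43: "cos (4*pi/3) = -1/2" and sin43: "sin (4*pi/3) = - sqrt 3 / 2"
proof -
  have e: "4*pi/3 = pi/3 + pi" by simp
  show "cos (4*pi/3) = -1/2" unfolding e cos_add cos_60 sin_60 by simp
  show "sin (4*pi/3) = - sqrt 3 / 2" unfolding e sin_add cos_60 sin_60 by simp
qed

theorem proposition7p1:
  fixes a b c u :: real
  assumes "a > b" "b > 0" "c > 0" "c^2 = a^2 - b^2"
  defines "M \<equiv> ell_point a b u"
  defines "P' \<equiv> (\<lambda>i. neg_pedal a b c u (cusp_param u i))"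
  defines "P'' \<equiv> (\<lambda>i. curv_center a b c (cusp_param u i))"
  shows "(\<forall>i\<in>{1,2,3::nat}. P' i = 2 *\<^sub>R P'' i - M)
    \<and> tri_area (P'' 1) (P'' 2) (P'' 3) = 27 * sqrt 3 / 64 * c^4 / (a * b)
    \<and> tri_area (P'' 1) (P'' 2) (P'' 3) = tri_area (P' 1) (P' 2) (P' 3) / 4"
proof -
  define t where "t = - u / 3"
  have a0: "a > 0" using assms by simp
  have c1: "cusp_param u 1 = t" unfolding cusp_param_def t_def by simp
  have c2: "cusp_param u 2 = t - 2*pi/3" unfolding cusp_param_def t_def by simp
  have c3: "cusp_param u 3 = t - 4*pi/3" unfolding cusp_param_def t_def by simp
  have u1: "cos u = cos (3*t)" "sin u = - sin (3*t)" unfolding t_def by simp_all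
  have e2: "3*(t - 2*pi/3) = -u - 2*pi" unfolding t_def by simp
  have u2: "cos u = cos (3*(t - 2*pi/3))" "sin u = - sin (3*(t - 2*pi/3))"
    unfolding e2 by (simp_all add: cos_diff sin_diff)
  have e3: "3*(t - 4*pi/3) = -u - 2*pi - 2*pi" unfolding t_def by simp
  have u3: "cos u = cos (3*(t - 4*pi/3))" "sin u = - sin (3*(t - 4*pi/3))"
    unfolding e3 by (simp_all add: cos_diff sin_diff)
  have part1: "\<forall>i\<in>{1,2,3::nat}. P' i = 2 *\<^sub>R P'' i - M"
    unfolding P'_def P''_def M_def
    using key[OF a0 assms(2,4) u1] key[OF a0 assms(2,4) u2] key[OF a0 assms(2,4) u3] c1 c2 c3
    by auto
  have part3: "tri_area (P' 1) (P' 2) (P' 3) = 4 * tri_area (P'' 1) (P'' 2) (P'' 3)"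
    using part1 tri_scale by simp
  have cube: "cos (cusp_param u i) ^ 3 = (3 * cos (cusp_param u i) + cos u) / 4
      \<and> sin (cusp_param u i) ^ 3 = (3 * sin (cusp_param u i) + sin u) / 4" if "i \<in> {1,2,3}" for i
  proof -
    have "cos u = cos (3 * cusp_param u i) \<and> sin u = - sin (3 * cusp_param u i)"
      using that u1 u2 u3 c1 c2 c3 by auto
    then show ?thesis using cos_treble_cos[of "cusp_param u i"] sin3[of "cusp_param u i"] by auto
  qed
  define C where "C = cos t"
  define S where "S = sin t"
  define r where "r = sqrt 3"
  have r2: "r^2 = 3" unfolding r_def by simp
  have sc: "S^2 + C^2 = 1" unfolding S_def C_def by simp
  have cc2: "cos (t - 2*pi/3) = -C/2 + r/2*S" "sin (t - 2*pi/3) = -S/2 - r/2*C"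
    unfolding C_def S_def r_def by (simp_all add: cos_diff sin_diff cos_120 sin_120)
  have cc3: "cos (t - 4*pi/3) = -C/2 - r/2*S" "sin (t - 4*pi/3) = -S/2 + r/2*C"
    unfolding C_def S_def r_def by (simp_all add: cos_diff sin_diff cos43 sin43)
  have D: "((-C/2 + r/2*S) - C) * ((-S/2 + r/2*C) - S) - ((-C/2 - r/2*S) - C) * ((-S/2 - r/2*C) - S)
      = - 3 * r / 2"
  proof -
    have "((-C/2 + r/2*S) - C) * ((-S/2 + r/2*C) - S) - ((-C/2 - r/2*S) - C) * ((-S/2 - r/2*C) - S)
      = - 3 * r / 2 * (S^2 + C^2)" by (simp add: algebra_simps power2_eq_square)
    then show ?thesis using sc by simp
  qed
  have gen: "\<And>al be K L X1 X2 X3 Y1 Y2 Y3 :: real.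
      (al * ((3*X2+K)/4) - al * ((3*X1+K)/4)) * (- (be * ((3*Y3+L)/4)) - - (be * ((3*Y1+L)/4)))
    - (al * ((3*X3+K)/4) - al * ((3*X1+K)/4)) * (- (be * ((3*Y2+L)/4)) - - (be * ((3*Y1+L)/4)))
    = - (al * be * 9 / 16) * ((X2 - X1) * (Y3 - Y1) - (X3 - X1) * (Y2 - Y1))"
    by (simp add: field_simps)
  have cu1: "curv_center a b c (cusp_param u i) =
     (c^2/a * ((3 * cos (cusp_param u i) + cos u) / 4), - (c^2/b * ((3 * sin (cusp_param u i) + sin u) / 4)))"
    if "i \<in> {1,2,3}" for i
    unfolding curv_center_def by (simp only: cube[OF that, THEN conjunct1] cube[OF that, THEN conjunct2]) simp
  have p1: "P'' 1 = (c^2/a * ((3 * C + cos u) / 4), - (c^2/b * ((3 * S + sin u) / 4)))"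
    using cu1[of 1] unfolding P''_def c1 C_def S_def by simp
  have p2: "P'' 2 = (c^2/a * ((3 * (-C/2 + r/2*S) + cos u) / 4), - (c^2/b * ((3 * (-S/2 - r/2*C) + sin u) / 4)))"
    using cu1[of 2] unfolding P''_def c2 cc2 by simp
  have p3: "P'' 3 = (c^2/a * ((3 * (-C/2 - r/2*S) + cos u) / 4), - (c^2/b * ((3 * (-S/2 + r/2*C) + sin u) / 4)))"
    using cu1[of 3] unfolding P''_def c3 cc3 by simp
  have part2: "tri_area (P'' 1) (P'' 2) (P'' 3) = 27 * sqrt 3 / 64 * c^4 / (a * b)"
    unfolding tri_area_def p1 p2 p3 fst_conv snd_conv gen D
    using a0 assms(2) by (simp add: r_def abs_mult power2_eq_square power4_eq_xxxx field_simps)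
  show ?thesis using part1 part2 part3 by simp
qed

end
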